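(* Let $R$ be a weakly $r$-clean ring whose only idempotents are $0$ and $1$. Then the center $Z(R)=\{z\in R: zx=xz \text{ for all } x\in R\}$ of $R$ is a weakly $r$-clean ring.
   Context: Rings are associative with identity. $Idem(R)$ denotes the idempotents of $R$ and $Reg(R)=\{r\in R:\ r=ryr \text{ for some } y\in R\}$ its regular elements. An element $x\in R$ is weakly $r$-clean if $x=r+e$ or $x=r-e$ for some $r\in Reg(R)$, $e\in Idem(R)$; $R$ is weakly $r$-clean if all its elements are weakly $r$-clean. *)

theory Defs
  imports Main
begin

text \<open>Notions relative to a subset S of a ring (S is meant to be a subring,
  e.g. UNIV or the center), so that the center can be treated as a ring in its own right.\<close>

definition Idem_in :: "'a::ring_1 set \<Rightarrow> 'a set" where
  "Idem_in S = {e \<in> S. e * e = e}"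

definition Reg_in :: "'a::ring_1 set \<Rightarrow> 'a set" where
  "Reg_in S = {r \<in> S. \<exists>y\<in>S. r = r * y * r}"

definition weakly_r_clean_in :: "'a::ring_1 set \<Rightarrow> 'a \<Rightarrow> bool" where
  "weakly_r_clean_in S x \<longleftrightarrow>
     (\<exists>r\<in>Reg_in S. \<exists>e\<in>Idem_in S. x = r + e \<or> x = r - e)"

definition weakly_r_clean_ring_on :: "'a::ring_1 set \<Rightarrow> bool" where
  "weakly_r_clean_ring_on S \<longleftrightarrow> (\<forall>x\<in>S. weakly_r_clean_in S x)"

definition center :: "'a::ring_1 set" where
  "center = {z. \<forall>x. z * x = x * z}"

end

theory Submission
  imports Defs
begin

lemma central_reg:
  fixes a :: "'a::ring_1"
  assumes idem: "Idem_in (UNIV :: 'a set) = {0, 1}"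
    and ac: "a \<in> center" and y: "a = a * y * a"
  shows "a \<in> Reg_in center"
proof -
  have ay: "a * y * (a * y) = a * y" using y by (metis mult.assoc)
  hence "a * y \<in> Idem_in UNIV" by (simp add: Idem_in_def)
  hence "a * y = 0 \<or> a * y = 1" using idem by auto
  thus ?thesis
  proof
    assume "a * y = 0"
    hence "a = 0" using y by simp
    moreover have "(0::'a) \<in> center" by (simp add: center_def)
    ultimately show ?thesis by (auto simp: Reg_in_def)
  next
    assume h: "a * y = 1"
    have ya: "y * a = 1" using ac h by (simp add: center_def)
    have "y \<in> center"
    proof -
      { fix x :: 'a
        have "y * x = y * x * (a * y)" using h by simp
        also have "\<dots> = y * (x * a) * y" by (simp add: mult.assoc)
        also have "\<dots> = y * (a * x) * y" using ac by (simp add: center_def)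
        also have "\<dots> = (y * a) * x * y" by (simp add: mult.assoc)
        also have "\<dots> = x * y" using ya by simp
        finally have "y * x = x * y" . }
      thus ?thesis by (simp add: center_def)
    qed
    thus ?thesis using ac y by (auto simp: Reg_in_def)
  qed
qed

theorem theorem2p17:
  assumes "weakly_r_clean_ring_on (UNIV :: 'a::ring_1 set)"
    and "Idem_in (UNIV :: 'a set) = {0, 1}"
  shows "weakly_r_clean_ring_on (center :: 'a set)"
  unfolding weakly_r_clean_ring_on_def
proof
  fix z :: 'a assume zc: "z \<in> center"
  obtain r e where r: "r \<in> Reg_in UNIV" and e: "e \<in> Idem_in UNIV"
    and ze: "z = r + e \<or> z = r - e"
    using assms(1) unfolding weakly_r_clean_ring_on_def weakly_r_clean_in_def by blast
  have e01: "e = 0 \<or> e = 1" using e assms(2) by auto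
  have c0: "(0::'a) \<in> center" and c1: "(1::'a) \<in> center" by (simp_all add: center_def)
  have ec: "e \<in> center" using e01 c0 c1 by auto
  have rc: "r \<in> center"
  proof -
    have "r = z - e \<or> r = z + e" using ze by (auto simp: algebra_simps)
    thus ?thesis using zc ec by (auto simp: center_def algebra_simps)
  qed
  obtain y where "r = r * y * r" using r by (auto simp: Reg_in_def)
  hence "r \<in> Reg_in center" using central_reg[OF assms(2) rc] by simp
  moreover have "e \<in> Idem_in center" using ec e by (simp add: Idem_in_def)
  ultimately show "weakly_r_clean_in center z" using ze
    unfolding weakly_r_clean_in_def by blast
qed

end
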